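(* Let $G$ be a graph, and let $B,C\subseteq V(G)$ where $B$ covers $C$. Suppose every induced subgraph $J$ of $G$ with $\omega(J)<\omega(G)$ has chromatic number at most $\tau$. Let the enumeration $(b_1,\ldots,b_m)$ of $B$ and the grading $(W_1,\ldots,W_n)$ of $G[C]$ be compatible, and let the grading be $w$-colourable. Let $\ell,\rho\ge 3$ be integers, and suppose $$\chi(C)>w\tau\bigl(4(\ell+2)\chi^{\rho}(G)+w\bigr).$$ Then there is an induced path $p_1\hbox{-}\cdots\hbox{-}p_k$ of $G[C]$ such that: $k\ge \ell$; $p_1p_2$ is a square edge; $p_1,p_2$ are both earlier than all of $p_3,\ldots,p_k$; and, letting $b,b'$ be the earliest parents of $p_1,p_2$ respectively, for each $v\in\{b,b',p_1,\ldots,p_\ell\}$ the $G$-distance between $p_k$ and $v$ is at least $\rho+1$.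
   Context: Graphs are finite and simple; $\chi(X)=\chi(G[X])$. $B$ covers $C$ means $B\cap C=\emptyset$ and every vertex of $C$ has a neighbour in $B$. Given an enumeration $(b_1,\ldots,b_m)$ of $B$, $b_i$ is earlier than $b_j$ if $i<j$; the earliest parent of $v\in C$ is $b_i$ with $i$ minimum such that $b_iv$ is an edge. An edge $uv$ of $G[C]$ is square if the earliest parent of $u$ is nonadjacent to $v$ and the earliest parent of $v$ is nonadjacent to $u$. A grading of $G[C]$ is a sequence $(W_1,\ldots,W_n)$ of pairwise disjoint subsets of $C$ with union $C$; it is $w$-colourable if each $\chi(G[W_i])\le w$; $u$ is earlier than $v$ if $u\in W_i$, $v\in W_j$, $i<j$. Enumeration and grading are compatible if whenever $u$ is earlier than $v$ (in $C$), the earliest parent of $u$ is earlier than that of $v$. $N^{\rho}[v]$ is the set of vertices at $G$-distance at most $\rho$ from $v$; $\chi^{\rho}(G)=\max_v \chi(N^{\rho}[v])$ (and $0$ for the null graph). *)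

theory Defs
  imports Main
begin

definition simple_graph :: "'a set \<Rightarrow> ('a \<Rightarrow> 'a \<Rightarrow> bool) \<Rightarrow> bool" where
  "simple_graph V E \<longleftrightarrow> finite V \<and> (\<forall>x y. E x y \<longrightarrow> E y x) \<and> (\<forall>x. \<not> E x x)
     \<and> (\<forall>x y. E x y \<longrightarrow> x \<in> V \<and> y \<in> V)"

definition chromatic_number :: "('a \<Rightarrow> 'a \<Rightarrow> bool) \<Rightarrow> 'a set \<Rightarrow> nat" where
  "chromatic_number E X = (LEAST k. \<exists>f :: 'a \<Rightarrow> nat.
      (\<forall>x\<in>X. f x < k) \<and> (\<forall>x\<in>X. \<forall>y\<in>X. E x y \<longrightarrow> f x \<noteq> f y))"

definition clique_number :: "('a \<Rightarrow> 'a \<Rightarrow> bool) \<Rightarrow> 'a set \<Rightarrow> nat" where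
  "clique_number E X = Max {card K | K. K \<subseteq> X \<and> (\<forall>x\<in>K. \<forall>y\<in>K. x \<noteq> y \<longrightarrow> E x y)}"

definition covers :: "('a \<Rightarrow> 'a \<Rightarrow> bool) \<Rightarrow> 'a set \<Rightarrow> 'a set \<Rightarrow> bool" where
  "covers E B C \<longleftrightarrow> B \<inter> C = {} \<and> (\<forall>v\<in>C. \<exists>b\<in>B. E b v)"

text \<open>Enumeration of B as a distinct list bs (0-based). Index and vertex of the earliest parent.\<close>
definition earliest_parent_idx :: "('a \<Rightarrow> 'a \<Rightarrow> bool) \<Rightarrow> 'a list \<Rightarrow> 'a \<Rightarrow> nat" where
  "earliest_parent_idx E bs v = (LEAST i. i < length bs \<and> E (bs ! i) v)"

definition earliest_parent :: "('a \<Rightarrow> 'a \<Rightarrow> bool) \<Rightarrow> 'a list \<Rightarrow> 'a \<Rightarrow> 'a" where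
  "earliest_parent E bs v = bs ! earliest_parent_idx E bs v"

definition square_edge :: "('a \<Rightarrow> 'a \<Rightarrow> bool) \<Rightarrow> 'a list \<Rightarrow> 'a \<Rightarrow> 'a \<Rightarrow> bool" where
  "square_edge E bs u v \<longleftrightarrow> E u v \<and> \<not> E (earliest_parent E bs u) v \<and> \<not> E (earliest_parent E bs v) u"

definition is_grading :: "'a set list \<Rightarrow> 'a set \<Rightarrow> bool" where
  "is_grading Ws C \<longleftrightarrow> (\<forall>i<length Ws. \<forall>j<length Ws. i \<noteq> j \<longrightarrow> Ws ! i \<inter> Ws ! j = {})
     \<and> (\<Union>(set Ws)) = C"

definition grading_colourable :: "('a \<Rightarrow> 'a \<Rightarrow> bool) \<Rightarrow> 'a set list \<Rightarrow> nat \<Rightarrow> bool" where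
  "grading_colourable E Ws w \<longleftrightarrow> (\<forall>i<length Ws. chromatic_number E (Ws ! i) \<le> w)"

definition grading_earlier :: "'a set list \<Rightarrow> 'a \<Rightarrow> 'a \<Rightarrow> bool" where
  "grading_earlier Ws u v \<longleftrightarrow> (\<exists>i j. i < j \<and> j < length Ws \<and> u \<in> Ws ! i \<and> v \<in> Ws ! j)"

definition compatible :: "('a \<Rightarrow> 'a \<Rightarrow> bool) \<Rightarrow> 'a list \<Rightarrow> 'a set list \<Rightarrow> 'a set \<Rightarrow> bool" where
  "compatible E bs Ws C \<longleftrightarrow> (\<forall>u\<in>C. \<forall>v\<in>C. grading_earlier Ws u v \<longrightarrow>
      earliest_parent_idx E bs u < earliest_parent_idx E bs v)"

definition is_walk :: "('a \<Rightarrow> 'a \<Rightarrow> bool) \<Rightarrow> 'a list \<Rightarrow> bool" where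
  "is_walk E xs \<longleftrightarrow> xs \<noteq> [] \<and> (\<forall>i. Suc i < length xs \<longrightarrow> E (xs ! i) (xs ! Suc i))"

definition ball :: "('a \<Rightarrow> 'a \<Rightarrow> bool) \<Rightarrow> nat \<Rightarrow> 'a \<Rightarrow> 'a set" where
  "ball E \<rho> v = {u. \<exists>xs. is_walk E xs \<and> hd xs = v \<and> last xs = u \<and> length xs \<le> \<rho> + 1}"

definition local_chi :: "'a set \<Rightarrow> ('a \<Rightarrow> 'a \<Rightarrow> bool) \<Rightarrow> nat \<Rightarrow> nat" where
  "local_chi V E \<rho> = Max ({0} \<union> {chromatic_number E (ball E \<rho> v) | v. v \<in> V})"

definition induced_path :: "('a \<Rightarrow> 'a \<Rightarrow> bool) \<Rightarrow> 'a list \<Rightarrow> bool" where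
  "induced_path E ps \<longleftrightarrow> ps \<noteq> [] \<and> distinct ps \<and>
     (\<forall>i<length ps. \<forall>j<length ps. E (ps ! i) (ps ! j) \<longleftrightarrow> (i = Suc j \<or> j = Suc i))"

end

theory Submission
  imports Defs
begin

definition proper :: "('a \<Rightarrow> 'a \<Rightarrow> bool) \<Rightarrow> 'a set \<Rightarrow> ('a \<Rightarrow> nat) \<Rightarrow> nat \<Rightarrow> bool" where
  "proper E X f k \<longleftrightarrow> (\<forall>x\<in>X. f x < k) \<and> (\<forall>x\<in>X. \<forall>y\<in>X. E x y \<longrightarrow> f x \<noteq> f y)"

lemma chi_alt: "chromatic_number E X = (LEAST k. \<exists>f. proper E X f k)"
  unfolding chromatic_number_def proper_def by (rule refl)

lemma chi_le: "proper E X f k \<Longrightarrow> chromatic_number E X \<le> k"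
  unfolding chi_alt by (rule Least_le) blast

lemma chi_exists:
  assumes "finite X" "\<forall>x. \<not> E x x"
  shows "\<exists>f. proper E X f (chromatic_number E X)"
proof -
  obtain f :: "'a \<Rightarrow> nat" and n where f: "f ` X = {i. i < n}" "inj_on f X"
    using finite_imp_inj_to_nat_seg[OF assms(1)] by blast
  have "proper E X f n"
    unfolding proper_def
  proof (intro conjI ballI impI)
    fix x assume "x \<in> X" then show "f x < n" using f(1) by blast
  next
    fix x y assume "x \<in> X" "y \<in> X" "E x y"
    then have "x \<noteq> y" using assms(2) by blast
    then show "f x \<noteq> f y" using f(2) \<open>x \<in> X\<close> \<open>y \<in> X\<close> by (meson inj_onD)
  qed
  then have "\<exists>k f. proper E X f k" by blast
  then have "\<exists>f. proper E X f (LEAST k. \<exists>f. proper E X f k)" by (rule LeastI_ex)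
  then show ?thesis unfolding chi_alt .
qed
lemma chi_mono:
  assumes "finite Y" "\<forall>x. \<not> E x x" "X \<subseteq> Y"
  shows "chromatic_number E X \<le> chromatic_number E Y"
proof -
  obtain f where "proper E Y f (chromatic_number E Y)" using chi_exists assms by blast
  then have "proper E X f (chromatic_number E Y)" using assms(3) unfolding proper_def by blast
  then show ?thesis by (rule chi_le)
qed

lemma chi_union:
  assumes "finite A" "finite B" "\<forall>x. \<not> E x x"
  shows "chromatic_number E (A \<union> B) \<le> chromatic_number E A + chromatic_number E B"
proof -
  obtain f where f: "proper E A f (chromatic_number E A)" using chi_exists assms by blast
  obtain g where g: "proper E B g (chromatic_number E B)" using chi_exists assms by blast
  define h where "h x = (if x \<in> A then f x else chromatic_number E A + g x)" for x
  have "proper E (A \<union> B) h (chromatic_number E A + chromatic_number E B)"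
    unfolding proper_def
  proof (intro conjI ballI impI)
    fix x assume "x \<in> A \<union> B"
    then show "h x < chromatic_number E A + chromatic_number E B"
      using f g unfolding proper_def h_def by (cases "x \<in> A") auto
  next
    fix x y assume xy: "x \<in> A \<union> B" "y \<in> A \<union> B" "E x y"
    have fA: "\<forall>x\<in>A. f x < chromatic_number E A" "\<forall>x\<in>A. \<forall>y\<in>A. E x y \<longrightarrow> f x \<noteq> f y"
      using f unfolding proper_def by auto
    have gB: "\<forall>x\<in>B. \<forall>y\<in>B. E x y \<longrightarrow> g x \<noteq> g y"
      using g unfolding proper_def by auto
    show "h x \<noteq> h y"
    proof (cases "x \<in> A")
      case True
      show ?thesis
      proof (cases "y \<in> A")
        case True
        then show ?thesis using \<open>x \<in> A\<close> fA xy unfolding h_def by auto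
      next
        case False
        then show ?thesis using \<open>x \<in> A\<close> fA unfolding h_def by fastforce
      qed
    next
      case False
      show ?thesis
      proof (cases "y \<in> A")
        case True
        then show ?thesis using \<open>x \<notin> A\<close> fA unfolding h_def by fastforce
      next
        case False
        then show ?thesis using \<open>x \<notin> A\<close> gB xy unfolding h_def by auto
      qed
    qed
  qed
  then show ?thesis by (rule chi_le)
qed

lemma chi_sep:
  assumes "finite A" "finite B" "\<forall>x. \<not> E x x" "\<forall>a\<in>A. \<forall>b\<in>B. \<not> E a b \<and> \<not> E b a"
  shows "chromatic_number E (A \<union> B) \<le> max (chromatic_number E A) (chromatic_number E B)"
proof -
  obtain f where f: "proper E A f (chromatic_number E A)" using chi_exists assms by blast
  obtain g where g: "proper E B g (chromatic_number E B)" using chi_exists assms by blast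
  define h where "h x = (if x \<in> A then f x else g x)" for x
  have "proper E (A \<union> B) h (max (chromatic_number E A) (chromatic_number E B))"
    unfolding proper_def
  proof (intro conjI ballI impI)
    fix x assume "x \<in> A \<union> B"
    then show "h x < max (chromatic_number E A) (chromatic_number E B)"
      using f g unfolding proper_def h_def by (cases "x \<in> A") (auto simp: less_max_iff_disj)
  next
    fix x y assume xy: "x \<in> A \<union> B" "y \<in> A \<union> B" "E x y"
    have fA: "\<forall>x\<in>A. \<forall>y\<in>A. E x y \<longrightarrow> f x \<noteq> f y"
      using f unfolding proper_def by auto
    have gB: "\<forall>x\<in>B. \<forall>y\<in>B. E x y \<longrightarrow> g x \<noteq> g y"
      using g unfolding proper_def by auto
    show "h x \<noteq> h y"
    proof (cases "x \<in> A")
      case True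
      show ?thesis
      proof (cases "y \<in> A")
        case True
        then show ?thesis using \<open>x \<in> A\<close> fA xy unfolding h_def by auto
      next
        case False
        then have "y \<in> B" using xy by auto
        then show ?thesis using \<open>x \<in> A\<close> xy assms(4) by blast
      qed
    next
      case False
      then have "x \<in> B" using xy by auto
      show ?thesis
      proof (cases "y \<in> A")
        case True
        then show ?thesis using \<open>x \<in> B\<close> xy assms(4) by blast
      next
        case False
        then show ?thesis using \<open>x \<notin> A\<close> \<open>x \<in> B\<close> gB xy unfolding h_def by auto
      qed
    qed
  qed
  then show ?thesis by (rule chi_le)
qed

lemma chi_pos:
  assumes "finite X" "\<forall>x. \<not> E x x" "X \<noteq> {}"
  shows "0 < chromatic_number E X"
proof -
  obtain f where "proper E X f (chromatic_number E X)" using chi_exists assms by blast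
  then show ?thesis using assms(3) unfolding proper_def by auto
qed

lemma chi_empty: "chromatic_number E {} = 0"
proof -
  have "proper E {} f 0" for f unfolding proper_def by auto
  then have "chromatic_number E {} \<le> 0" using chi_le by blast
  then show ?thesis by simp
qed

lemma chi_diff:
  assumes "finite Z" "\<forall>x. \<not> E x x"
  shows "chromatic_number E Z \<le> chromatic_number E (Z - A) + chromatic_number E (Z \<inter> A)"
proof -
  have "Z = (Z - A) \<union> (Z \<inter> A)" by blast
  then show ?thesis using chi_union[of "Z - A" "Z \<inter> A" E] assms by simp
qed

lemma chi_UN:
  assumes "finite I" "\<forall>i\<in>I. finite (A i)" "\<forall>i\<in>I. chromatic_number E (A i) \<le> t" "\<forall>x. \<not> E x x"
  shows "chromatic_number E (\<Union>i\<in>I. A i) \<le> card I * t"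
  using assms
proof (induction I rule: finite_induct)
  case empty
  then show ?case by (simp add: chi_empty)
next
  case (insert i I)
  have "chromatic_number E (\<Union>j\<in>insert i I. A j) = chromatic_number E (A i \<union> (\<Union>j\<in>I. A j))" by simp
  also have "\<dots> \<le> chromatic_number E (A i) + chromatic_number E (\<Union>j\<in>I. A j)"
    using insert by (intro chi_union) auto
  also have "\<dots> \<le> t + card I * t" using insert by (intro add_mono) auto
  finally show ?case using insert by simp
qed


definition rel :: "('a \<Rightarrow> 'a \<Rightarrow> bool) \<Rightarrow> 'a set \<Rightarrow> 'a \<Rightarrow> 'a \<Rightarrow> bool" where
  "rel E X a b \<longleftrightarrow> a \<in> X \<and> b \<in> X \<and> E a b"

definition conn :: "('a \<Rightarrow> 'a \<Rightarrow> bool) \<Rightarrow> 'a set \<Rightarrow> bool" where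
  "conn E X \<longleftrightarrow> X \<noteq> {} \<and> (\<forall>x\<in>X. \<forall>y\<in>X. (rel E X)\<^sup>*\<^sup>* x y)"

definition attached :: "('a \<Rightarrow> 'a \<Rightarrow> bool) \<Rightarrow> 'a \<Rightarrow> 'a set \<Rightarrow> bool" where
  "attached E x Y \<longleftrightarrow> (\<exists>y\<in>Y. E x y)"

lemma rel_sym:
  assumes "\<forall>x y. E x y \<longrightarrow> E y x" "(rel E X)\<^sup>*\<^sup>* a b"
  shows "(rel E X)\<^sup>*\<^sup>* b a"
  using assms(2)
proof (induction rule: rtranclp_induct)
  case base
  then show ?case by simp
next
  case (step y z)
  then have "rel E X z y" using assms(1) unfolding rel_def by blast
  then show ?case using step(3) by (rule converse_rtranclp_into_rtranclp)
qed

lemma rel_mono: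
  assumes "X \<subseteq> Y" "(rel E X)\<^sup>*\<^sup>* a b"
  shows "(rel E Y)\<^sup>*\<^sup>* a b"
proof -
  have "rel E X \<le> rel E Y" using assms(1) unfolding rel_def by auto
  then show ?thesis using assms(2) rtranclp_mono by blast
qed

lemma rel_in:
  assumes "(rel E X)\<^sup>*\<^sup>* a b" "a \<in> X"
  shows "b \<in> X"
  using assms by (induction rule: rtranclp_induct) (auto simp: rel_def)

lemma conn_edge:
  assumes "\<forall>x y. E x y \<longrightarrow> E y x" "conn E D" "Y \<subseteq> D" "Y \<noteq> {}" "Y \<noteq> D"
  shows "\<exists>x\<in>D-Y. \<exists>y\<in>Y. E x y"
proof -
  obtain a where a: "a \<in> Y" using assms(4) by blast
  obtain c where c: "c \<in> D" "c \<notin> Y" using assms(3,5) by blast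
  have "(rel E D)\<^sup>*\<^sup>* a c" using assms(2,3) a c unfolding conn_def by blast
  then have "c \<notin> Y \<longrightarrow> (\<exists>x\<in>D-Y. \<exists>y\<in>Y. E x y)"
  proof (induction rule: rtranclp_induct)
    case base
    then show ?case using a by blast
  next
    case (step y z)
    show ?case
    proof
      assume "z \<notin> Y"
      show "\<exists>x\<in>D-Y. \<exists>y\<in>Y. E x y"
      proof (cases "y \<in> Y")
        case True
        have "z \<in> D" "E z y" using step(2) assms(1) unfolding rel_def by auto
        then show ?thesis using True \<open>z \<notin> Y\<close> by blast
      next
        case False
        then show ?thesis using step(3) by blast
      qed
    qed
  qed
  then show ?thesis using c by blast
qed

lemma conn_insert:
  assumes "\<forall>x y. E x y \<longrightarrow> E y x" "conn E Y" "y0 \<in> Y" "E x y0"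
  shows "conn E (insert x Y)"
proof -
  let ?S = "insert x Y"
  have r0: "(rel E ?S)\<^sup>*\<^sup>* x y" if "y \<in> Y" for y
  proof -
    have "(rel E Y)\<^sup>*\<^sup>* y0 y" using assms(2,3) that unfolding conn_def by blast
    then have "(rel E ?S)\<^sup>*\<^sup>* y0 y" by (rule rel_mono[rotated]) blast
    moreover have "rel E ?S x y0" using assms(3,4) unfolding rel_def by blast
    ultimately show ?thesis by (rule converse_rtranclp_into_rtranclp[rotated])
  qed
  have r1: "(rel E ?S)\<^sup>*\<^sup>* x y" if "y \<in> ?S" for y
    using r0 that by (cases "y = x") auto
  show ?thesis unfolding conn_def
  proof (intro conjI ballI)
    show "?S \<noteq> {}" by blast
  next
    fix a b assume ab: "a \<in> ?S" "b \<in> ?S"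
    have "(rel E ?S)\<^sup>*\<^sup>* a x" using rel_sym[OF assms(1) r1[OF ab(1)]] .
    then show "(rel E ?S)\<^sup>*\<^sup>* a b" using r1[OF ab(2)] by (rule rtranclp_trans)
  qed
qed

definition cmp :: "('a \<Rightarrow> 'a \<Rightarrow> bool) \<Rightarrow> 'a set \<Rightarrow> 'a \<Rightarrow> 'a set" where
  "cmp E X x = {y. (rel E X)\<^sup>*\<^sup>* x y}"

lemma cmp_props:
  assumes "\<forall>x y. E x y \<longrightarrow> E y x" "x \<in> X"
  shows "cmp E X x \<subseteq> X" "x \<in> cmp E X x" "conn E (cmp E X x)"
    "\<forall>y\<in>cmp E X x. \<forall>z\<in>X - cmp E X x. \<not> E z y"
proof -
  show "cmp E X x \<subseteq> X" unfolding cmp_def using rel_in assms(2) by fast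
  show "x \<in> cmp E X x" unfolding cmp_def by simp
  show "\<forall>y\<in>cmp E X x. \<forall>z\<in>X - cmp E X x. \<not> E z y"
  proof (intro ballI notI)
    fix y z assume yz: "y \<in> cmp E X x" "z \<in> X - cmp E X x" "E z y"
    have "y \<in> X" using yz(1) unfolding cmp_def using rel_in assms(2) by fast
    then have "rel E X y z" using yz assms(1) unfolding rel_def by blast
    then have "(rel E X)\<^sup>*\<^sup>* x z" using yz(1) unfolding cmp_def by auto
    then show False using yz(2) unfolding cmp_def by blast
  qed
  have in_c: "(rel E (cmp E X x))\<^sup>*\<^sup>* x y" if "(rel E X)\<^sup>*\<^sup>* x y" for y
    using that
  proof (induction rule: rtranclp_induct)
    case base
    then show ?case by simp
  next
    case (step y z)
    have "y \<in> cmp E X x" "z \<in> cmp E X x" using step(1,2) unfolding cmp_def by auto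
    then have "rel E (cmp E X x) y z" using step(2) unfolding rel_def by blast
    then show ?case using step(3) by (rule rtranclp.rtrancl_into_rtrancl[rotated])
  qed
  show "conn E (cmp E X x)" unfolding conn_def
  proof (intro conjI ballI)
    show "cmp E X x \<noteq> {}" unfolding cmp_def by auto
  next
    fix a b assume ab: "a \<in> cmp E X x" "b \<in> cmp E X x"
    have "(rel E (cmp E X x))\<^sup>*\<^sup>* x a" "(rel E (cmp E X x))\<^sup>*\<^sup>* x b"
      using ab in_c unfolding cmp_def by auto
    then have "(rel E (cmp E X x))\<^sup>*\<^sup>* a x" "(rel E (cmp E X x))\<^sup>*\<^sup>* x b"
      using rel_sym[OF assms(1)] by auto
    then show "(rel E (cmp E X x))\<^sup>*\<^sup>* a b" by (rule rtranclp_trans)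
  qed
qed

lemma big_comp:
  assumes "\<forall>x y. E x y \<longrightarrow> E y x" "\<forall>x. \<not> E x x" "finite X" "X \<noteq> {}"
  shows "\<exists>Y\<subseteq>X. conn E Y \<and> (\<forall>y\<in>Y. \<forall>x\<in>X-Y. \<not> E x y) \<and> chromatic_number E Y = chromatic_number E X"
  using assms(3,4)
proof (induction "card X" arbitrary: X rule: less_induct)
  case less
  obtain x where x: "x \<in> X" using less.prems by blast
  let ?Y = "cmp E X x"
  note P = cmp_props[OF assms(1) x]
  have fY: "finite ?Y" using P(1) less.prems(1) finite_subset by blast
  have fR: "finite (X - ?Y)" using less.prems(1) by blast
  have XU: "X = ?Y \<union> (X - ?Y)" using P(1) by blast
  have sep: "\<forall>a\<in>?Y. \<forall>b\<in>X - ?Y. \<not> E a b \<and> \<not> E b a" using P(4) assms(1) by blast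
  have le: "chromatic_number E X \<le> max (chromatic_number E ?Y) (chromatic_number E (X - ?Y))"
    using chi_sep[OF fY fR assms(2) sep] XU by simp
  have geY: "chromatic_number E ?Y \<le> chromatic_number E X" using chi_mono less.prems(1) assms(2) P(1) by blast
  show ?case
  proof (cases "chromatic_number E (X - ?Y) \<le> chromatic_number E ?Y")
    case True
    then have "chromatic_number E ?Y = chromatic_number E X" using le geY by simp
    then show ?thesis using P by blast
  next
    case False
    then have ne: "X - ?Y \<noteq> {}" using chi_empty[of E] by (metis le0)
    have "X - ?Y \<subset> X" using P(2) x by blast
    then have lt: "card (X - ?Y) < card X" using less.prems(1) by (rule psubset_card_mono[rotated])
    obtain Z where Z: "Z \<subseteq> X - ?Y" "conn E Z" "\<forall>y\<in>Z. \<forall>x\<in>(X - ?Y)-Z. \<not> E x y"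
      "chromatic_number E Z = chromatic_number E (X - ?Y)"
      using less.hyps[OF lt fR ne] by blast
    have "X - ?Y \<subseteq> X" by blast
    then have "chromatic_number E (X - ?Y) \<le> chromatic_number E X"
      using chi_mono less.prems(1) assms(2) by blast
    then have "chromatic_number E Z = chromatic_number E X" using Z(4) le False by simp
    moreover have "\<forall>y\<in>Z. \<forall>x\<in>X-Z. \<not> E x y" using Z(1,3) sep by blast
    ultimately show ?thesis using Z(1,2) by blast
  qed
qed


lemma rel_walk:
  assumes "(rel E S)\<^sup>*\<^sup>* a z" "a \<in> S"
  shows "\<exists>xs. is_walk E xs \<and> hd xs = a \<and> last xs = z \<and> set xs \<subseteq> S"
  using assms(1)
proof (induction rule: rtranclp_induct)
  case base
  have "is_walk E [a]" unfolding is_walk_def by simp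
  then show ?case using assms(2) by fastforce
next
  case (step y z)
  then obtain xs where xs: "is_walk E xs" "hd xs = a" "last xs = y" "set xs \<subseteq> S" by blast
  have yz: "E y z" "z \<in> S" using step(2) unfolding rel_def by auto
  have ne: "xs \<noteq> []" using xs(1) unfolding is_walk_def by blast
  have "is_walk E (xs @ [z])" unfolding is_walk_def
  proof (intro conjI allI impI)
    show "xs @ [z] \<noteq> []" by simp
  next
    fix i assume i: "Suc i < length (xs @ [z])"
    show "E ((xs @ [z]) ! i) ((xs @ [z]) ! Suc i)"
    proof (cases "Suc i < length xs")
      case True
      then show ?thesis using xs(1) unfolding is_walk_def by (simp add: nth_append)
    next
      case False
      then have "i = length xs - 1" "Suc i = length xs" using i by auto
      then show ?thesis using yz(1) xs(3) ne by (simp add: nth_append last_conv_nth)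
    qed
  qed
  then show ?case using xs ne yz by (intro exI[of _ "xs @ [z]"]) (auto simp: hd_append)
qed

lemma walk_shortcut:
  assumes "is_walk E xs" "0 < k" "k \<le> m" "m < length xs" "E (xs ! (k - 1)) (xs ! m)"
  shows "is_walk E (take k xs @ drop m xs)" "hd (take k xs @ drop m xs) = hd xs"
    "last (take k xs @ drop m xs) = last xs" "set (take k xs @ drop m xs) \<subseteq> set xs"
    "length (take k xs @ drop m xs) = length xs - (m - k)"
proof -
  let ?ys = "take k xs @ drop m xs"
  have ne: "xs \<noteq> []" using assms(4) by auto
  have lk: "length (take k xs) = k" using assms(3,4) by simp
  show "length ?ys = length xs - (m - k)" using assms(3,4) by simp
  show "is_walk E ?ys" unfolding is_walk_def
  proof (intro conjI allI impI)
    show "?ys \<noteq> []" using assms(2) ne by simp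
  next
    fix i assume i: "Suc i < length ?ys"
    consider (a) "Suc i < k" | (b) "Suc i = k" | (c) "Suc i > k" by linarith
    then show "E (?ys ! i) (?ys ! Suc i)"
    proof cases
      case a
      then have "?ys ! i = xs ! i" "?ys ! Suc i = xs ! Suc i" using lk by (auto simp: nth_append)
      moreover have "Suc i < length xs" using a assms(3,4) by linarith
      ultimately show ?thesis using assms(1) unfolding is_walk_def by simp
    next
      case b
      then have "?ys ! i = xs ! (k - 1)" "?ys ! Suc i = xs ! m" using lk assms(3,4) by (auto simp: nth_append)
      then show ?thesis using assms(5) by simp
    next
      case c
      then have "?ys ! i = xs ! (m + (i - k))" "?ys ! Suc i = xs ! Suc (m + (i - k))"
        using lk assms(3,4) i by (auto simp: nth_append Suc_diff_le)
      moreover have "Suc (m + (i - k)) < length xs" using i c assms(3,4) by simp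
      ultimately show ?thesis using assms(1) unfolding is_walk_def by simp
    qed
  qed
  show "hd ?ys = hd xs" using assms(2) ne by (simp add: hd_append hd_conv_nth)
  show "last ?ys = last xs" using assms(4) by (simp add: last_append)
  show "set ?ys \<subseteq> set xs" using set_take_subset[of k xs] set_drop_subset[of m xs] by auto
qed

lemma walk_drop:
  assumes "is_walk E xs" "m < length xs"
  shows "is_walk E (drop m xs)" "last (drop m xs) = last xs" "hd (drop m xs) = xs ! m"
    "set (drop m xs) \<subseteq> set xs" "length (drop m xs) = length xs - m"
proof -
  show "is_walk E (drop m xs)" using assms unfolding is_walk_def by auto
  show "last (drop m xs) = last xs" using assms(2) by simp
  show "hd (drop m xs) = xs ! m" using assms(2) by (simp add: hd_drop_conv_nth)
  show "set (drop m xs) \<subseteq> set xs" by (rule set_drop_subset)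
  show "length (drop m xs) = length xs - m" by simp
qed

lemma min_walk_induced:
  assumes sym: "\<forall>x y. E x y \<longrightarrow> E y x" and irr: "\<forall>x. \<not> E x x"
    and P: "is_walk E xs" "hd xs = a" "last xs = z" "set xs \<subseteq> S"
    and minl: "\<forall>ys. is_walk E ys \<and> hd ys = a \<and> last ys = z \<and> set ys \<subseteq> S \<longrightarrow> length xs \<le> length ys"
  shows "induced_path E xs"
proof -
  have ne: "xs \<noteq> []" using P(1) unfolding is_walk_def by blast
  have chord: "j = Suc i" if ij: "i < j" "j < length xs" "E (xs ! i) (xs ! j)" for i j
  proof (rule ccontr)
    assume "j \<noteq> Suc i"
    then have lt: "Suc i < j" using ij by simp
    have pre: "0 < Suc i" "Suc i \<le> j" using lt by auto
    have e: "E (xs ! (Suc i - 1)) (xs ! j)" using ij by simp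
    note W = walk_shortcut[OF P(1) pre ij(2) e]
    have "set (take (Suc i) xs @ drop j xs) \<subseteq> S" using W(4) P(4) by blast
    then have "length xs \<le> length (take (Suc i) xs @ drop j xs)"
      using minl W(1,2,3) P(2,3) by blast
    then show False using W(5) lt ij(2) by simp
  qed
  have dist: "xs ! i \<noteq> xs ! j" if ij: "i < j" "j < length xs" for i j
  proof
    assume eq: "xs ! i = xs ! j"
    show False
    proof (cases "i = 0")
      case True
      note W = walk_drop[OF P(1) ij(2)]
      have "hd (drop j xs) = a" using W(3) eq True P(2) ne by (simp add: hd_conv_nth)
      moreover have "set (drop j xs) \<subseteq> S" using W(4) P(4) by blast
      ultimately have "length xs \<le> length (drop j xs)" using W(1,2) P(3) minl by blast
      then show False using W(5) ij by simp
    next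
      case False
      have "Suc (i - 1) < length xs" using False ij by simp
      then have "E (xs ! (i - 1)) (xs ! Suc (i - 1))" using P(1) unfolding is_walk_def by blast
      then have e: "E (xs ! (i - 1)) (xs ! j)" using eq False by simp
      have pre: "0 < i" "i \<le> j" using False ij by auto
      note W = walk_shortcut[OF P(1) pre ij(2) e]
      have "set (take i xs @ drop j xs) \<subseteq> S" using W(4) P(4) by blast
      then have "length xs \<le> length (take i xs @ drop j xs)"
        using minl W(1,2,3) P(2,3) by blast
      then show False using W(5) ij by simp
    qed
  qed
  show ?thesis unfolding induced_path_def
  proof (intro conjI allI impI)
    show "xs \<noteq> []" by (rule ne)
    show "distinct xs" unfolding distinct_conv_nth
      using dist by (metis linorder_neqE_nat)
  next
    fix i j assume ij: "i < length xs" "j < length xs"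
    show "E (xs ! i) (xs ! j) \<longleftrightarrow> (i = Suc j \<or> j = Suc i)"
    proof
      assume e: "E (xs ! i) (xs ! j)"
      consider "i < j" | "i = j" | "j < i" by linarith
      then show "i = Suc j \<or> j = Suc i"
      proof cases
        case 1 then show ?thesis using chord ij e by blast
      next
        case 2 then show ?thesis using irr e by blast
      next
        case 3 then show ?thesis using chord ij e sym by blast
      qed
    next
      assume "i = Suc j \<or> j = Suc i"
      then show "E (xs ! i) (xs ! j)"
        using P(1) ij sym unfolding is_walk_def by auto
    qed
  qed
qed


lemma induced_append:
  assumes sym: "\<forall>x y. E x y \<longrightarrow> E y x"
    and Q: "induced_path E qs" and T: "induced_path E (last qs # ts)"
    and nadj: "\<forall>i. Suc i < length qs \<longrightarrow> (\<forall>t\<in>set ts. \<not> E (qs ! i) t)"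
    and disj: "set qs \<inter> set ts = {}"
  shows "induced_path E (qs @ ts)"
proof -
  let ?n = "length qs" and ?q = "last qs # ts" and ?p = "qs @ ts"
  have ne: "qs \<noteq> []" using Q unfolding induced_path_def by blast
  then have n1: "?n \<ge> 1" by (cases qs) auto
  have idx: "?p ! k = ?q ! (k - (?n - 1))" if "k \<ge> ?n - 1" "k < ?n + length ts" for k
  proof (cases "k = ?n - 1")
    case True
    have "?n - 1 < ?n" using n1 by simp
    then have "?p ! k = qs ! (?n - 1)" using True by (simp add: nth_append)
    also have "\<dots> = last qs" using ne by (simp add: last_conv_nth)
    finally show ?thesis using True by simp
  next
    case False
    then have k: "k \<ge> ?n" using that by simp
    then have "?p ! k = ts ! (k - ?n)" by (simp add: nth_append)
    moreover have "k - (?n - 1) = Suc (k - ?n)" using k n1 by simp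
    ultimately show ?thesis by simp
  qed
  have Qp: "\<forall>i<?n. \<forall>j<?n. E (qs ! i) (qs ! j) \<longleftrightarrow> (i = Suc j \<or> j = Suc i)"
    using Q unfolding induced_path_def by blast
  have Tp: "\<forall>i<length ?q. \<forall>j<length ?q. E (?q ! i) (?q ! j) \<longleftrightarrow> (i = Suc j \<or> j = Suc i)"
    using T unfolding induced_path_def by blast
  have dts: "distinct ts" using T unfolding induced_path_def by simp
  show ?thesis unfolding induced_path_def
  proof (intro conjI allI impI)
    show "?p \<noteq> []" using ne by simp
    show "distinct ?p" using Q dts disj unfolding induced_path_def by simp
  next
    fix i j assume ij: "i < length ?p" "j < length ?p"
    show "E (?p ! i) (?p ! j) \<longleftrightarrow> (i = Suc j \<or> j = Suc i)"
    proof (cases "i < ?n \<and> j < ?n")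
      case True
      then show ?thesis using Qp by (simp add: nth_append)
    next
      case F1: False
      show ?thesis
      proof (cases "i \<ge> ?n - 1 \<and> j \<ge> ?n - 1")
        case True
        have "?p ! i = ?q ! (i - (?n - 1))" "?p ! j = ?q ! (j - (?n - 1))"
          using idx True ij by auto
        moreover have "i - (?n - 1) < length ?q" "j - (?n - 1) < length ?q" using ij True n1 by auto
        moreover have "(i - (?n - 1) = Suc (j - (?n - 1)) \<or> j - (?n - 1) = Suc (i - (?n - 1)))
            \<longleftrightarrow> (i = Suc j \<or> j = Suc i)" using True n1 by auto
        ultimately show ?thesis using Tp by simp
      next
        case False
        then consider "i < ?n - 1 \<and> j \<ge> ?n" | "j < ?n - 1 \<and> i \<ge> ?n" using F1 by linarith
        then show ?thesis
        proof cases
          case 1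
          then have "?p ! i = qs ! i" "?p ! j = ts ! (j - ?n)" by (auto simp: nth_append)
          moreover have "ts ! (j - ?n) \<in> set ts" using ij 1 by (intro nth_mem) (simp, linarith)
          moreover have "Suc i < ?n" using 1 by linarith
          ultimately have "\<not> E (?p ! i) (?p ! j)" using nadj by simp
          then show ?thesis using 1 by auto
        next
          case 2
          then have "?p ! j = qs ! j" "?p ! i = ts ! (i - ?n)" by (auto simp: nth_append)
          moreover have "ts ! (i - ?n) \<in> set ts" using ij 2 by (intro nth_mem) (simp, linarith)
          moreover have "Suc j < ?n" using 2 by linarith
          ultimately have "\<not> E (?p ! j) (?p ! i)" using nadj by simp
          then have "\<not> E (?p ! i) (?p ! j)" using sym by blast
          then show ?thesis using 2 by auto
        qed
      qed
    qed
  qed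
qed

lemma induced_two:
  assumes "E a b" "E b a" "\<forall>x. \<not> E x x"
  shows "induced_path E [a, b]"
proof -
  have "a \<noteq> b" using assms by blast
  then show ?thesis unfolding induced_path_def using assms
    by (auto simp: less_2_cases_iff nth_Cons')
qed


locale setting =
  fixes V :: "'a set" and E :: "'a \<Rightarrow> 'a \<Rightarrow> bool" and B C :: "'a set"
    and bs :: "'a list" and Ws :: "'a set list" and \<tau> w \<rho> :: nat
  assumes G: "simple_graph V E" and BV: "B \<subseteq> V" and CV: "C \<subseteq> V"
    and cov: "covers E B C"
    and tau: "\<forall>X\<subseteq>V. clique_number E X < clique_number E V \<longrightarrow> chromatic_number E X \<le> \<tau>"
    and setbs: "set bs = B" and grading: "is_grading Ws C" and wcol: "grading_colourable E Ws w"
    and r2: "\<rho> \<ge> 2"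
begin

lemma finV: "finite V" using G unfolding simple_graph_def by blast
lemma symE: "\<forall>x y. E x y \<longrightarrow> E y x" using G unfolding simple_graph_def by blast
lemma irrE: "\<forall>x. \<not> E x x" using G unfolding simple_graph_def by blast
lemma EV: "E x y \<Longrightarrow> x \<in> V \<and> y \<in> V" using G unfolding simple_graph_def by blast
lemma finsub: "X \<subseteq> V \<Longrightarrow> finite X" using finV finite_subset by blast
lemma finC: "X \<subseteq> C \<Longrightarrow> finite X" using finsub CV by blast

lemma par: assumes "v \<in> C"
  shows "earliest_parent_idx E bs v < length bs \<and> E (earliest_parent E bs v) v"
proof -
  obtain b where b: "b \<in> B" "E b v" using cov assms unfolding covers_def by blast
  then obtain i where i: "i < length bs" "bs ! i = b" using setbs by (metis in_set_conv_nth)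
  then have ex: "\<exists>i. i < length bs \<and> E (bs ! i) v" using b by blast
  show ?thesis unfolding earliest_parent_def earliest_parent_idx_def
    using LeastI_ex[OF ex] by blast
qed

lemma par_le: "i < length bs \<Longrightarrow> E (bs ! i) v \<Longrightarrow> earliest_parent_idx E bs v \<le> i"
  unfolding earliest_parent_idx_def by (rule Least_le) blast

lemma par_B: "v \<in> C \<Longrightarrow> earliest_parent E bs v \<in> B"
  using par setbs unfolding earliest_parent_def by (metis nth_mem)

lemma par_V: "v \<in> C \<Longrightarrow> earliest_parent E bs v \<in> V"
  using par_B BV by blast

lemma sq_sym: "square_edge E bs u v \<Longrightarrow> square_edge E bs v u"
  unfolding square_edge_def using symE by blast

lemma sqfree:
  assumes X: "X \<subseteq> C" and nsq: "\<forall>u\<in>X. \<forall>v\<in>X. \<not> square_edge E bs u v"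
  shows "chromatic_number E X \<le> \<tau>"
proof (cases "X = {}")
  case True
  then show ?thesis by (simp add: chi_empty)
next
  case False
  then obtain v0 where v0: "v0 \<in> X" by blast
  have XV: "X \<subseteq> V" using X CV by blast
  let ?SV = "{card K | K. K \<subseteq> V \<and> (\<forall>x\<in>K. \<forall>y\<in>K. x \<noteq> y \<longrightarrow> E x y)}"
  let ?SX = "{card K | K. K \<subseteq> X \<and> (\<forall>x\<in>K. \<forall>y\<in>K. x \<noteq> y \<longrightarrow> E x y)}"
  have finSV: "finite ?SV"
  proof -
    have "?SV \<subseteq> card ` Pow V" by blast
    then show ?thesis using finV finite_subset by blast
  qed
  have finSX: "finite ?SX"
  proof -
    have "?SX \<subseteq> card ` Pow X" by blast
    then show ?thesis using finsub[OF XV] finite_subset by blast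
  qed
  have geV: "card K \<le> clique_number E V" if "K \<subseteq> V" "\<forall>x\<in>K. \<forall>y\<in>K. x \<noteq> y \<longrightarrow> E x y" for K
  proof -
    have "card K \<in> ?SV" using that by blast
    then show ?thesis unfolding clique_number_def by (rule Max_ge[OF finSV])
  qed
  have lt: "card K < clique_number E V" if K: "K \<subseteq> X" "\<forall>x\<in>K. \<forall>y\<in>K. x \<noteq> y \<longrightarrow> E x y" for K
  proof (cases "K = {}")
    case True
    have "card {v0} \<le> clique_number E V" using v0 XV by (intro geV) auto
    then show ?thesis using True by simp
  next
    case False
    have finK: "finite K" using K(1) finsub XV by blast
    let ?m = "Max (earliest_parent_idx E bs ` K)"
    have "?m \<in> earliest_parent_idx E bs ` K" using finK False by (intro Max_in) auto
    then obtain v where v: "v \<in> K" "earliest_parent_idx E bs v = ?m" by (metis imageE)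
    have vmax: "earliest_parent_idx E bs u \<le> earliest_parent_idx E bs v" if "u \<in> K" for u
      using v(2) finK that by simp
    let ?b = "earliest_parent E bs v"
    have vC: "v \<in> C" using v K X by blast
    have badj: "E ?b u" if u: "u \<in> K" for u
    proof (cases "u = v")
      case True
      then show ?thesis using par[OF vC] by blast
    next
      case False
      have uC: "u \<in> C" using u K X by blast
      have "E u v" using K(2) u v(1) False by blast
      moreover have "\<not> square_edge E bs u v" using nsq u v(1) K(1) by blast
      ultimately have "E (earliest_parent E bs u) v \<or> E ?b u" unfolding square_edge_def by blast
      then show ?thesis
      proof
        assume e: "E (earliest_parent E bs u) v"
        have "earliest_parent_idx E bs v \<le> earliest_parent_idx E bs u"
          using par_le[of "earliest_parent_idx E bs u" v] par[OF uC] e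
          unfolding earliest_parent_def by blast
        then have "earliest_parent_idx E bs v = earliest_parent_idx E bs u" using vmax[OF u] by simp
        then have "?b = earliest_parent E bs u" unfolding earliest_parent_def by simp
        then show ?thesis using par[OF uC] by simp
      qed
    qed
    have bnK: "?b \<notin> K" using par_B[OF vC] K(1) X cov unfolding covers_def by blast
    have "card (insert ?b K) \<le> clique_number E V"
    proof (rule geV)
      show "insert ?b K \<subseteq> V" using par_V[OF vC] K(1) XV by blast
      have b2: "\<forall>y\<in>K. E y ?b" using badj symE by blast
      show "\<forall>x\<in>insert ?b K. \<forall>y\<in>insert ?b K. x \<noteq> y \<longrightarrow> E x y"
      proof (intro ballI impI)
        fix x y assume xy: "x \<in> insert ?b K" "y \<in> insert ?b K" "x \<noteq> y"
        show "E x y"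
        proof (cases "x = ?b")
          case True
          then have "y \<in> K" using xy by blast
          then show ?thesis using True badj by blast
        next
          case False
          then have xK: "x \<in> K" using xy by blast
          show ?thesis
          proof (cases "y = ?b")
            case True
            then show ?thesis using xK b2 by blast
          next
            case False
            then have "y \<in> K" using xy by blast
            then show ?thesis using xK xy(3) K(2) by blast
          qed
        qed
      qed
    qed
    then show ?thesis using bnK finK by simp
  qed
  have "(0::nat) \<in> ?SX" by (intro CollectI exI[of _ "{}"]) simp
  then have "?SX \<noteq> {}" by blast
  then have "clique_number E X \<in> ?SX" unfolding clique_number_def by (rule Max_in[OF finSX])
  then obtain K where K: "clique_number E X = card K" "K \<subseteq> X" "\<forall>x\<in>K. \<forall>y\<in>K. x \<noteq> y \<longrightarrow> E x y"
    by auto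
  have "clique_number E X < clique_number E V" using lt[OF K(2,3)] K(1) by simp
  then show ?thesis using tau XV by simp
qed


definition gr :: "'a \<Rightarrow> nat" where
  "gr x = (LEAST i. i < length Ws \<and> x \<in> Ws ! i)"

lemma gr: assumes "x \<in> C" shows "gr x < length Ws" "x \<in> Ws ! gr x"
proof -
  have "x \<in> \<Union>(set Ws)" using grading assms unfolding is_grading_def by blast
  then obtain W where "W \<in> set Ws" "x \<in> W" by blast
  then obtain i where i: "i < length Ws" "Ws ! i = W" by (metis in_set_conv_nth)
  then have ex: "\<exists>i. i < length Ws \<and> x \<in> Ws ! i" using \<open>x \<in> W\<close> by blast
  show "gr x < length Ws" "x \<in> Ws ! gr x" unfolding gr_def using LeastI_ex[OF ex] by blast+
qed

lemma gr_unique: assumes "i < length Ws" "x \<in> Ws ! i" shows "gr x = i"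
proof -
  have le: "gr x \<le> i" unfolding gr_def using assms by (intro Least_le) blast
  have ex: "\<exists>i. i < length Ws \<and> x \<in> Ws ! i" using assms by blast
  have g: "gr x < length Ws" "x \<in> Ws ! gr x" unfolding gr_def using LeastI_ex[OF ex] by blast+
  show ?thesis
  proof (rule ccontr)
    assume "gr x \<noteq> i"
    then have "Ws ! gr x \<inter> Ws ! i = {}" using grading g(1) assms(1) unfolding is_grading_def by blast
    then show False using g(2) assms(2) by blast
  qed
qed

lemma Ws_sub: "i < length Ws \<Longrightarrow> Ws ! i \<subseteq> C"
  using grading unfolding is_grading_def by (metis Union_upper nth_mem)

lemma chi_W: "i < length Ws \<Longrightarrow> chromatic_number E (Ws ! i) \<le> w"
  using wcol unfolding grading_colourable_def by blast

definition later :: "nat \<Rightarrow> 'a set" where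
  "later j = {x \<in> C. j < gr x}"

lemma later_sub: "later j \<subseteq> C" unfolding later_def by blast

definition kap :: nat where "kap = local_chi V E \<rho>"

lemma walk_last_V: assumes "is_walk E xs" "hd xs \<in> V" shows "last xs \<in> V"
proof -
  have ne: "xs \<noteq> []" using assms unfolding is_walk_def by blast
  have l: "last xs = xs ! (length xs - 1)" using ne by (simp add: last_conv_nth)
  have h: "hd xs = xs ! 0" using ne by (simp add: hd_conv_nth)
  show ?thesis
  proof (cases "length xs = 1")
    case True
    then show ?thesis using assms(2) l h by simp
  next
    case False
    have lp: "length xs > 0" using ne by simp
    then have s: "Suc (length xs - 2) = length xs - 1" "Suc (length xs - 2) < length xs" using False by linarith+
    have "E (xs ! (length xs - 2)) (xs ! Suc (length xs - 2))" using assms(1) s(2) unfolding is_walk_def by blast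
    then have "E (xs ! (length xs - 2)) (last xs)" using s(1) l by simp
    then show ?thesis using EV by blast
  qed
qed

lemma ball_V: assumes "v \<in> V" shows "ball E \<rho> v \<subseteq> V"
proof
  fix u assume "u \<in> ball E \<rho> v"
  then obtain xs where "is_walk E xs" "hd xs = v" "last xs = u" unfolding Defs.ball_def by auto
  then show "u \<in> V" using walk_last_V assms by blast
qed

lemma ball_chi: assumes "v \<in> V" shows "chromatic_number E (ball E \<rho> v) \<le> kap"
proof -
  let ?S = "{0} \<union> {chromatic_number E (ball E \<rho> v) | v. v \<in> V}"
  have m: "chromatic_number E (ball E \<rho> v) \<in> ?S" using assms by (intro UnI2 CollectI exI[of _ v]) simp
  have f: "finite ?S" using finV by simp
  show ?thesis unfolding kap_def local_chi_def by (rule Max_ge[OF f m])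
qed

lemma nbr_ball: assumes "E v y" shows "y \<in> ball E \<rho> v"
proof -
  have "is_walk E [v, y]" using assms unfolding is_walk_def by (auto simp: nth_Cons')
  then show ?thesis unfolding Defs.ball_def using r2 by (intro CollectI exI[of _ "[v, y]"]) auto
qed

lemma ball2: assumes "E v x" "E x y" shows "y \<in> ball E \<rho> v"
proof -
  have "is_walk E [v, x, y]" using assms unfolding is_walk_def by (auto simp: nth_Cons' less_Suc_eq)
  then show ?thesis unfolding Defs.ball_def using r2 by (intro CollectI exI[of _ "[v, x, y]"]) auto
qed

lemma chi_sub_ball: assumes "v \<in> V" "Z \<subseteq> ball E \<rho> v" shows "chromatic_number E Z \<le> kap"
proof -
  have "chromatic_number E Z \<le> chromatic_number E (ball E \<rho> v)"
    by (rule chi_mono[where E=E, OF finsub[OF ball_V[OF assms(1)]] irrE assms(2)])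
  then show ?thesis using ball_chi[OF assms(1)] by simp
qed

lemma chi_rm_nbr: assumes "v \<in> V" "Z \<subseteq> V"
  shows "chromatic_number E Z \<le> chromatic_number E (Z - {y. E v y}) + kap"
proof -
  have "chromatic_number E Z \<le> chromatic_number E (Z - {y. E v y}) + chromatic_number E (Z \<inter> {y. E v y})"
    by (rule chi_diff[where E=E, OF finsub[OF assms(2)] irrE])
  moreover have "Z \<inter> {y. E v y} \<subseteq> ball E \<rho> v" using nbr_ball by blast
  then have "chromatic_number E (Z \<inter> {y. E v y}) \<le> kap" by (rule chi_sub_ball[OF assms(1)])
  ultimately show ?thesis by simp
qed


lemma mono': "X \<subseteq> Y \<Longrightarrow> Y \<subseteq> V \<Longrightarrow> chromatic_number E X \<le> chromatic_number E Y"
  by (rule chi_mono[where E=E, OF finsub irrE])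

lemma union': "X \<subseteq> V \<Longrightarrow> Y \<subseteq> V \<Longrightarrow> chromatic_number E (X \<union> Y) \<le> chromatic_number E X + chromatic_number E Y"
  by (rule chi_union[where E=E, OF finsub finsub irrE])

lemma pos': "X \<subseteq> V \<Longrightarrow> X \<noteq> {} \<Longrightarrow> 0 < chromatic_number E X"
  by (rule chi_pos[where E=E, OF finsub irrE])

lemma bigc': "X \<subseteq> V \<Longrightarrow> X \<noteq> {} \<Longrightarrow>
   \<exists>Y\<subseteq>X. conn E Y \<and> (\<forall>y\<in>Y. \<forall>x\<in>X-Y. \<not> E x y) \<and> chromatic_number E Y = chromatic_number E X"
  by (rule big_comp[where E=E, OF symE irrE finsub])

lemma cedge': "conn E D \<Longrightarrow> Y \<subseteq> D \<Longrightarrow> Y \<noteq> {} \<Longrightarrow> Y \<noteq> D \<Longrightarrow> \<exists>x\<in>D-Y. \<exists>y\<in>Y. E x y"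
  by (rule conn_edge[where E=E, OF symE])

lemma cins': "conn E Y \<Longrightarrow> y0 \<in> Y \<Longrightarrow> E x y0 \<Longrightarrow> conn E (insert x Y)"
  by (rule conn_insert[where E=E, OF symE])

lemma conn_ne: "conn E Y \<Longrightarrow> Y \<noteq> {}" unfolding conn_def by blast

definition config :: "nat \<Rightarrow> bool" where
  "config \<theta> \<longleftrightarrow> (\<exists>p1 p2 j Z. p1 \<in> C \<and> p2 \<in> C \<and> square_edge E bs p1 p2 \<and> gr p1 \<le> j \<and> gr p2 \<le> j
     \<and> Z \<subseteq> later j \<and> conn E Z \<and> attached E p2 Z \<and> \<not> attached E p1 Z \<and> \<theta> < chromatic_number E Z)"

lemma configI:
  assumes "p1 \<in> C" "p2 \<in> C" "square_edge E bs p1 p2" "gr p1 \<le> j" "gr p2 \<le> j"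
    "Z \<subseteq> later j" "conn E Z" "attached E p2 Z" "\<not> attached E p1 Z" "\<theta> < chromatic_number E Z"
  shows "config \<theta>"
  unfolding config_def using assms by blast

context
  fixes \<theta> :: nat
  assumes nc: "\<not> config \<theta>"
begin

definition richat :: "'a \<Rightarrow> nat \<Rightarrow> bool" where
  "richat x j \<longleftrightarrow> (\<exists>D. D \<subseteq> later j \<and> conn E D \<and> attached E x D \<and> \<theta> + kap < chromatic_number E D)"

lemma richat_lt: assumes "richat x j" shows "j < length Ws"
proof -
  obtain D where D: "D \<subseteq> later j" "conn E D" using assms unfolding richat_def by blast
  obtain z where "z \<in> D" using conn_ne[OF D(2)] by blast
  then have "z \<in> C" "j < gr z" using D(1) unfolding later_def by auto
  then show ?thesis using gr(1) by (meson less_trans)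
qed

lemma richat_mono: assumes "richat x j" "i \<le> j" shows "richat x i"
proof -
  have "later j \<subseteq> later i" unfolding later_def using assms(2) by auto
  then show ?thesis using assms(1) unfolding richat_def by (meson order_trans)
qed

definition rr :: "'a \<Rightarrow> nat" where "rr x = (GREATEST j. richat x j)"

lemma rr: assumes "richat x j" shows "richat x (rr x)" "j \<le> rr x"
proof -
  have b: "\<And>y. richat x y \<Longrightarrow> y \<le> length Ws" using richat_lt less_imp_le by blast
  show "richat x (rr x)" unfolding rr_def by (rule GreatestI_nat[where P="richat x", OF assms b])
  show "j \<le> rr x" unfolding rr_def by (rule Greatest_le_nat[where P="richat x", OF assms b])
qed

definition RR :: "'a set" where "RR = {x \<in> C. richat x (gr x)}"

lemma RR_rr: assumes "x \<in> RR" shows "richat x (rr x)" "gr x \<le> rr x" "x \<in> C"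
  using assms rr unfolding RR_def by auto

lemma rr_lt_False:
  assumes u: "u \<in> RR" and v: "v \<in> RR" and sq: "square_edge E bs u v" and lt: "rr u < rr v"
  shows False
proof -
  obtain D where D: "D \<subseteq> later (rr v)" "conn E D" "attached E v D" "\<theta> + kap < chromatic_number E D"
    using RR_rr(1)[OF v] unfolding richat_def by blast
  have "\<not> attached E u D"
  proof
    assume "attached E u D"
    then have "richat u (rr v)" using D unfolding richat_def by blast
    then have "rr v \<le> rr u" using rr(2) by blast
    then show False using lt by simp
  qed
  moreover have "gr u \<le> rr v" using RR_rr(2)[OF u] lt by simp
  ultimately have "config \<theta>"
    using RR_rr(2,3)[OF v] RR_rr(3)[OF u] sq D by (intro configI[of u v "rr v" D \<theta>]) auto
  then show False using nc by blast
qed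

lemma rr_eq: "u \<in> RR \<Longrightarrow> v \<in> RR \<Longrightarrow> square_edge E bs u v \<Longrightarrow> rr u = rr v"
  using rr_lt_False sq_sym by (metis linorder_neqE_nat)



definition sqr :: "nat \<Rightarrow> 'a \<Rightarrow> 'a \<Rightarrow> bool" where
  "sqr t a b \<longleftrightarrow> a \<in> C \<and> b \<in> C \<and> gr a \<le> t \<and> gr b \<le> t \<and> square_edge E bs a b"

lemma sqr_sym: "(sqr t)\<^sup>*\<^sup>* a b \<Longrightarrow> (sqr t)\<^sup>*\<^sup>* b a"
proof (induction rule: rtranclp_induct)
  case base
  then show ?case by simp
next
  case (step y z)
  then have "sqr t z y" unfolding sqr_def using sq_sym by blast
  then show ?case using step(3) by (rule converse_rtranclp_into_rtranclp)
qed

lemma propag: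
  assumes "(sqr t)\<^sup>*\<^sup>* a b" "Y \<subseteq> later t" "conn E Y" "\<theta> < chromatic_number E Y" "attached E a Y"
  shows "attached E b Y"
  using assms(1)
proof (induction rule: rtranclp_induct)
  case base
  then show ?case using assms(5) .
next
  case (step y z)
  show ?case
  proof (rule ccontr)
    assume na: "\<not> attached E z Y"
    have s: "y \<in> C" "z \<in> C" "gr y \<le> t" "gr z \<le> t" "square_edge E bs z y"
      using step(2) sq_sym unfolding sqr_def by auto
    have "config \<theta>" using s assms(2,3,4) step(3) na by (intro configI[of z y t Y \<theta>]) auto
    then show False using nc by blast
  qed
qed

lemma lemX:
  assumes x: "x \<in> C" "richat x t" and xy: "(sqr t)\<^sup>*\<^sup>* x y"
  shows "y \<in> ball E \<rho> x"
proof -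
  obtain D where D: "D \<subseteq> later t" "conn E D" "attached E x D" "\<theta> + kap < chromatic_number E D"
    using x(2) unfolding richat_def by blast
  have DV: "D \<subseteq> V" using D(1) later_sub CV by blast
  have xV: "x \<in> V" using x(1) CV by blast
  let ?N = "{y. E x y}"
  let ?D1 = "D - ?N"
  have "chromatic_number E D \<le> chromatic_number E ?D1 + kap" by (rule chi_rm_nbr[OF xV DV])
  then have c1: "\<theta> < chromatic_number E ?D1" using D(4) by simp
  then have ne: "?D1 \<noteq> {}" using chi_empty[of E] by (metis not_less0)
  obtain B1 where B1: "B1 \<subseteq> ?D1" "conn E B1" "\<forall>y\<in>B1. \<forall>x\<in>?D1-B1. \<not> E x y"
    "chromatic_number E B1 = chromatic_number E ?D1"
    using bigc'[of ?D1] DV ne by blast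
  have B1ne: "B1 \<noteq> {}" using conn_ne[OF B1(2)] .
  have B1D: "B1 \<noteq> D"
  proof
    assume "B1 = D"
    obtain d where "d \<in> D" "E x d" using D(3) unfolding attached_def by blast
    then show False using \<open>B1 = D\<close> B1(1) by blast
  qed
  obtain x' y1 where xy1: "x' \<in> D - B1" "y1 \<in> B1" "E x' y1"
    using cedge'[OF D(2) _ B1ne B1D] B1(1) by blast
  have "E x x'"
  proof (rule ccontr)
    assume "\<not> E x x'"
    then have "x' \<in> ?D1 - B1" using xy1(1) by blast
    then show False using B1(3) xy1(2,3) by blast
  qed
  let ?Y = "insert x' B1"
  have Yc: "conn E ?Y" by (rule cins'[OF B1(2) xy1(2,3)])
  have Yl: "?Y \<subseteq> later t" using xy1(1) B1(1) D(1) by blast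
  have "chromatic_number E B1 \<le> chromatic_number E ?Y" using mono'[of B1 ?Y] Yl later_sub CV by blast
  then have Yb: "\<theta> < chromatic_number E ?Y" using B1(4) c1 by simp
  have "attached E x ?Y" using \<open>E x x'\<close> unfolding attached_def by blast
  then have ay: "attached E y ?Y" using propag[OF xy Yl Yc Yb] by blast
  have B1l: "B1 \<subseteq> later t" using Yl by blast
  have nB1: "\<not> attached E y B1"
  proof
    assume "attached E y B1"
    then have "attached E x B1" using propag[OF sqr_sym[OF xy] B1l B1(2)] B1(4) c1 by simp
    then show False using B1(1) unfolding attached_def by blast
  qed
  have "E y x'" using ay nB1 unfolding attached_def by blast
  then have "E x' y" using symE by blast
  then show ?thesis using ball2[OF \<open>E x x'\<close>] by blast
qed

definition Qx :: "'a \<Rightarrow> 'a set" where "Qx x = {y. (sqr (rr x))\<^sup>*\<^sup>* x y}"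

lemma Qx_ball: "x \<in> RR \<Longrightarrow> Qx x \<subseteq> ball E \<rho> x"
  unfolding Qx_def using lemX RR_rr by blast

lemma chi_Qx: assumes "x \<in> RR" shows "chromatic_number E (Qx x) \<le> kap"
  using chi_sub_ball[OF _ Qx_ball[OF assms]] RR_rr(3)[OF assms] CV by blast

definition fc :: "'a \<Rightarrow> 'a \<Rightarrow> nat" where "fc x = (SOME f. proper E (Qx x) f kap)"

lemma fc: assumes "x \<in> RR" shows "proper E (Qx x) (fc x) kap"
proof -
  have QV: "Qx x \<subseteq> V" using Qx_ball[OF assms] ball_V RR_rr(3)[OF assms] CV by blast
  obtain f where f: "proper E (Qx x) f (chromatic_number E (Qx x))"
    using chi_exists[where E=E, OF finsub[OF QV] irrE] by blast
  then have "proper E (Qx x) f kap" using chi_Qx[OF assms] unfolding proper_def by (meson less_le_trans)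
  then show ?thesis unfolding fc_def by (rule someI[where P="\<lambda>f. proper E (Qx x) f kap"])
qed

definition col :: "'a \<Rightarrow> nat" where "col x = fc x x"

lemma col_lt: "x \<in> RR \<Longrightarrow> col x < kap"
  using fc unfolding col_def proper_def Qx_def by simp

lemma class_sqfree:
  assumes u: "u \<in> RR" and v: "v \<in> RR" and c: "col u = col v"
  shows "\<not> square_edge E bs u v"
proof
  assume sq: "square_edge E bs u v"
  have e: "rr u = rr v" using rr_eq[OF u v sq] .
  have "sqr (rr u) u v" unfolding sqr_def using sq RR_rr[OF u] RR_rr[OF v] e by simp
  then have uv: "(sqr (rr u))\<^sup>*\<^sup>* u v" by blast
  have "Qx u = Qx v"
  proof
    show "Qx u \<subseteq> Qx v" unfolding Qx_def using sqr_sym[OF uv] e by (auto intro: rtranclp_trans)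
    show "Qx v \<subseteq> Qx u" unfolding Qx_def using uv e by (auto intro: rtranclp_trans)
  qed
  then have f: "fc u = fc v" unfolding fc_def by simp
  have "u \<in> Qx u" "v \<in> Qx u" unfolding Qx_def using uv by auto
  moreover have "E u v" using sq unfolding square_edge_def by blast
  ultimately have "fc u u \<noteq> fc u v" using fc[OF u] unfolding proper_def by blast
  then show False using c f unfolding col_def by simp
qed

lemma chi_RR: "chromatic_number E RR \<le> kap * \<tau>"
proof -
  let ?A = "\<lambda>i. {x \<in> RR. col x = i}"
  have eq: "RR = (\<Union>i\<in>{..<kap}. ?A i)" using col_lt by auto
  have "chromatic_number E (\<Union>i\<in>{..<kap}. ?A i) \<le> card {..<kap} * \<tau>"
  proof (rule chi_UN[where E=E])
    show "finite {..<kap}" by simp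
    show "\<forall>i\<in>{..<kap}. finite (?A i)" using finC unfolding RR_def by auto
    show "\<forall>x. \<not> E x x" by (rule irrE)
    show "\<forall>i\<in>{..<kap}. chromatic_number E (?A i) \<le> \<tau>"
    proof
      fix i
      have "?A i \<subseteq> C" unfolding RR_def by auto
      moreover have "\<forall>u\<in>?A i. \<forall>v\<in>?A i. \<not> square_edge E bs u v" using class_sqfree by auto
      ultimately show "chromatic_number E (?A i) \<le> \<tau>" by (rule sqfree)
    qed
  qed
  then show ?thesis using eq by simp
qed


lemma chi_NN: "chromatic_number E (C - RR) \<le> \<theta> + kap + w"
proof (cases "C - RR = {}")
  case True
  then have "chromatic_number E (C - RR) = 0" using chi_empty[of E] by metis
  then show ?thesis by simp
next
  case False
  have NV: "C - RR \<subseteq> V" using CV by blast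
  obtain K where K: "K \<subseteq> C - RR" "conn E K" "\<forall>y\<in>K. \<forall>x\<in>(C - RR)-K. \<not> E x y"
    "chromatic_number E K = chromatic_number E (C - RR)"
    using bigc'[OF NV False] by blast
  have Kne: "K \<noteq> {}" using conn_ne[OF K(2)] .
  have KV: "K \<subseteq> V" using K(1) NV by blast
  have KC: "K \<subseteq> C" using K(1) by blast
  have fK: "finite K" using finsub[OF KV] .
  let ?i = "Min (gr ` K)"
  have "?i \<in> gr ` K" using fK Kne by (intro Min_in) auto
  then obtain x0 where x0: "x0 \<in> K" "gr x0 = ?i" by (metis imageE)
  have imin: "?i \<le> gr x" if "x \<in> K" for x using fK that by simp
  have il: "?i < length Ws" using gr(1) x0 KC by (metis subsetD)
  let ?K1 = "{x \<in> K. ?i < gr x}"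
  let ?K0 = "K - ?K1"
  have K0W: "?K0 \<subseteq> Ws ! ?i"
  proof
    fix x assume x: "x \<in> ?K0"
    then have "x \<in> K" "\<not> ?i < gr x" by auto
    then have "gr x = ?i" using imin[of x] by simp
    then show "x \<in> Ws ! ?i" using gr(2) x KC by (metis DiffD1 subsetD)
  qed
  have WV: "Ws ! ?i \<subseteq> V" using Ws_sub[OF il] CV by blast
  have c0: "chromatic_number E ?K0 \<le> w"
    using mono'[OF K0W WV] chi_W[OF il] by simp
  have c1: "chromatic_number E ?K1 \<le> \<theta> + kap"
  proof (rule ccontr)
    assume "\<not> chromatic_number E ?K1 \<le> \<theta> + kap"
    then have big: "\<theta> + kap < chromatic_number E ?K1" by simp
    then have ne1: "?K1 \<noteq> {}" using chi_empty[of E] by (metis not_less0)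
    have K1V: "?K1 \<subseteq> V" using KV by blast
    obtain K' where K': "K' \<subseteq> ?K1" "conn E K'" "\<forall>y\<in>K'. \<forall>x\<in>?K1-K'. \<not> E x y"
      "chromatic_number E K' = chromatic_number E ?K1"
      using bigc'[OF K1V ne1] by blast
    have K'ne: "K' \<noteq> {}" using conn_ne[OF K'(2)] .
    have "x0 \<notin> K'" using x0 K'(1) by auto
    then have K'K: "K' \<noteq> K" using x0 by blast
    obtain x y where xy: "x \<in> K - K'" "y \<in> K'" "E x y"
      using cedge'[OF K(2) _ K'ne K'K] K'(1) by blast
    have "x \<notin> ?K1"
    proof
      assume "x \<in> ?K1"
      then have "x \<in> ?K1 - K'" using xy(1) by blast
      then show False using K'(3) xy(2,3) by blast
    qed
    then have gx: "gr x \<le> ?i" using xy(1) by auto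
    have "K' \<subseteq> later (gr x)"
    proof
      fix z assume "z \<in> K'"
      then have "z \<in> C" "?i < gr z" using K'(1) KC by auto
      then show "z \<in> later (gr x)" unfolding later_def using gx by simp
    qed
    then have "richat x (gr x)" unfolding richat_def attached_def
      using K'(2,4) big xy(2,3) by auto
    then have "x \<in> RR" unfolding RR_def using xy(1) KC by blast
    then show False using xy(1) K(1) by blast
  qed
  have eqK: "?K0 \<union> ?K1 = K" by blast
  have K0V: "?K0 \<subseteq> V" using KV by blast
  have K1V': "?K1 \<subseteq> V" using KV by blast
  have "chromatic_number E (?K0 \<union> ?K1) \<le> chromatic_number E ?K0 + chromatic_number E ?K1"
    by (rule union'[OF K0V K1V'])
  then have "chromatic_number E K \<le> chromatic_number E ?K0 + chromatic_number E ?K1"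
    unfolding eqK .
  then show ?thesis using c0 c1 K(4) by simp
qed

lemma count: "chromatic_number E C \<le> \<theta> + kap + w + kap * \<tau>"
proof -
  have eq: "(C - RR) \<union> RR = C" unfolding RR_def by blast
  have a: "RR \<subseteq> V" unfolding RR_def using CV by blast
  have b: "C - RR \<subseteq> V" using CV by blast
  have "chromatic_number E ((C - RR) \<union> RR) \<le> chromatic_number E (C - RR) + chromatic_number E RR"
    by (rule union'[OF b a])
  then have "chromatic_number E C \<le> chromatic_number E (C - RR) + chromatic_number E RR"
    unfolding eq .
  then show ?thesis using chi_NN chi_RR by simp
qed

end


lemma step:
  assumes Q: "induced_path E qs" "set qs \<subseteq> C" and Z: "Z \<subseteq> C" "conn E Z" "set qs \<inter> Z = {}"
    and at: "attached E (last qs) Z" and na: "\<forall>i. Suc i < length qs \<longrightarrow> \<not> attached E (qs ! i) Z"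
    and big: "kap + M < chromatic_number E Z"
  shows "\<exists>y Z'. y \<in> Z \<and> Z' \<subseteq> Z \<and> conn E Z' \<and> set (qs @ [y]) \<inter> Z' = {} \<and> attached E y Z'
     \<and> (\<forall>i. Suc i < length (qs @ [y]) \<longrightarrow> \<not> attached E ((qs @ [y]) ! i) Z')
     \<and> M < chromatic_number E Z' \<and> induced_path E (qs @ [y])"
proof -
  have ne: "qs \<noteq> []" using Q(1) unfolding induced_path_def by blast
  let ?a = "last qs"
  have aC: "?a \<in> C" using Q(2) ne by auto
  have aV: "?a \<in> V" using aC CV by blast
  have ZV: "Z \<subseteq> V" using Z(1) CV by blast
  let ?Z1 = "Z - {y. E ?a y}"
  have "chromatic_number E Z \<le> chromatic_number E ?Z1 + kap" by (rule chi_rm_nbr[OF aV ZV])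
  then have c1: "M < chromatic_number E ?Z1" using big by simp
  then have ne1: "?Z1 \<noteq> {}" using chi_empty[of E] by (metis not_less0)
  have Z1V: "?Z1 \<subseteq> V" using ZV by blast
  obtain Y where Y: "Y \<subseteq> ?Z1" "conn E Y" "\<forall>y\<in>Y. \<forall>x\<in>?Z1-Y. \<not> E x y"
    "chromatic_number E Y = chromatic_number E ?Z1"
    using bigc'[OF Z1V ne1] by blast
  have Yne: "Y \<noteq> {}" using conn_ne[OF Y(2)] .
  have YZ: "Y \<noteq> Z"
  proof
    assume "Y = Z"
    obtain d where "d \<in> Z" "E ?a d" using at unfolding attached_def by blast
    then show False using \<open>Y = Z\<close> Y(1) by blast
  qed
  obtain y y' where yy: "y \<in> Z - Y" "y' \<in> Y" "E y y'"
    using cedge'[OF Z(2) _ Yne YZ] Y(1) by blast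
  have ay: "E ?a y"
  proof (rule ccontr)
    assume "\<not> E ?a y"
    then have "y \<in> ?Z1 - Y" using yy(1) by blast
    then show False using Y(3) yy(2,3) by blast
  qed
  have yq: "y \<notin> set qs" using yy(1) Z(3) by blast
  have ip: "induced_path E (qs @ [y])"
  proof (rule induced_append[where E=E, OF symE Q(1)])
    show "induced_path E [last qs, y]" using ay symE irrE by (intro induced_two) auto
    show "\<forall>i. Suc i < length qs \<longrightarrow> (\<forall>t\<in>set [y]. \<not> E (qs ! i) t)"
      using na yy(1) unfolding attached_def by auto
    show "set qs \<inter> set [y] = {}" using yq by simp
  qed
  have n2: "\<forall>i. Suc i < length (qs @ [y]) \<longrightarrow> \<not> attached E ((qs @ [y]) ! i) Y"
  proof (intro allI impI)
    fix i assume i: "Suc i < length (qs @ [y])"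
    show "\<not> attached E ((qs @ [y]) ! i) Y"
    proof (cases "Suc i < length qs")
      case True
      then have "(qs @ [y]) ! i = qs ! i" by (simp add: nth_append)
      then show ?thesis using na True Y(1) unfolding attached_def by auto
    next
      case False
      then have "i = length qs - 1" using i by simp
      then have "(qs @ [y]) ! i = ?a" using ne by (simp add: nth_append last_conv_nth)
      then show ?thesis using Y(1) unfolding attached_def by auto
    qed
  qed
  have "set (qs @ [y]) \<inter> Y = {}" using Z(3) Y(1) yy(1) by auto
  moreover have "attached E y Y" using yy unfolding attached_def by blast
  moreover have "M < chromatic_number E Y" using Y(4) c1 by simp
  moreover have "Y \<subseteq> Z" using Y(1) by blast
  ultimately show ?thesis using yy(1) Y(2) n2 ip by blast
qed

lemma iter:
  assumes Q: "induced_path E qs0" "set qs0 \<subseteq> C" and Z: "Z0 \<subseteq> C" "conn E Z0" "set qs0 \<inter> Z0 = {}"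
    and at: "attached E (last qs0) Z0" and na: "\<forall>i. Suc i < length qs0 \<longrightarrow> \<not> attached E (qs0 ! i) Z0"
  shows "s * kap + M < chromatic_number E Z0 \<Longrightarrow> \<exists>rest Z. length rest = s \<and> set rest \<subseteq> Z0 \<and> Z \<subseteq> Z0
     \<and> induced_path E (qs0 @ rest) \<and> conn E Z \<and> set (qs0 @ rest) \<inter> Z = {}
     \<and> attached E (last (qs0 @ rest)) Z
     \<and> (\<forall>i. Suc i < length (qs0 @ rest) \<longrightarrow> \<not> attached E ((qs0 @ rest) ! i) Z)
     \<and> M < chromatic_number E Z"
proof (induction s arbitrary: M)
  case 0
  then show ?case using assms by (intro exI[of _ "[]"] exI[of _ Z0]) auto
next
  case (Suc s)
  have "s * kap + (kap + M) < chromatic_number E Z0" using Suc.prems by (simp add: algebra_simps)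
  then obtain rest Z where R: "length rest = s" "set rest \<subseteq> Z0" "Z \<subseteq> Z0"
     "induced_path E (qs0 @ rest)" "conn E Z" "set (qs0 @ rest) \<inter> Z = {}"
     "attached E (last (qs0 @ rest)) Z"
     "\<forall>i. Suc i < length (qs0 @ rest) \<longrightarrow> \<not> attached E ((qs0 @ rest) ! i) Z"
     "kap + M < chromatic_number E Z"
    using Suc.IH by blast
  have sC: "set (qs0 @ rest) \<subseteq> C" using Q(2) R(2) Z(1) by auto
  have ZC: "Z \<subseteq> C" using R(3) Z(1) by blast
  obtain y Z' where S: "y \<in> Z" "Z' \<subseteq> Z" "conn E Z'" "set ((qs0 @ rest) @ [y]) \<inter> Z' = {}"
     "attached E y Z'"
     "\<forall>i. Suc i < length ((qs0 @ rest) @ [y]) \<longrightarrow> \<not> attached E (((qs0 @ rest) @ [y]) ! i) Z'"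
     "M < chromatic_number E Z'" "induced_path E ((qs0 @ rest) @ [y])"
    using step[OF R(4) sC ZC R(5,6,7,8,9)] by blast
  show ?case
  proof (intro exI[of _ "rest @ [y]"] exI[of _ Z'] conjI)
    show "length (rest @ [y]) = Suc s" using R(1) by simp
    show "set (rest @ [y]) \<subseteq> Z0" using R(2,3) S(1) by auto
    show "Z' \<subseteq> Z0" using S(2) R(3) by blast
    show "induced_path E (qs0 @ rest @ [y])" using S(8) by simp
    show "conn E Z'" by (rule S(3))
    show "set (qs0 @ rest @ [y]) \<inter> Z' = {}" using S(4) by simp
    show "attached E (last (qs0 @ rest @ [y])) Z'" using S(5) by simp
    show "\<forall>i. Suc i < length (qs0 @ rest @ [y]) \<longrightarrow> \<not> attached E ((qs0 @ rest @ [y]) ! i) Z'"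
      using S(6) by simp
    show "M < chromatic_number E Z'" by (rule S(7))
  qed
qed

lemma tail:
  assumes Q: "induced_path E qs" "set qs \<subseteq> C" and Z: "Z \<subseteq> C" "conn E Z" "set qs \<inter> Z = {}"
    and at: "attached E (last qs) Z" and na: "\<forall>i. Suc i < length qs \<longrightarrow> \<not> attached E (qs ! i) Z"
    and z: "z \<in> Z"
  shows "\<exists>ts. ts \<noteq> [] \<and> set ts \<subseteq> Z \<and> last ts = z \<and> induced_path E (qs @ ts)"
proof -
  have ne: "qs \<noteq> []" using Q(1) unfolding induced_path_def by blast
  let ?a = "last qs"
  have aq: "?a \<in> set qs" using ne by simp
  have aZ: "?a \<notin> Z" using aq Z(3) by blast
  obtain y0 where y0: "y0 \<in> Z" "E ?a y0" using at unfolding attached_def by blast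
  let ?S = "insert ?a Z"
  have cS: "conn E ?S" by (rule cins'[OF Z(2) y0])
  have "(rel E ?S)\<^sup>*\<^sup>* ?a z" using cS z unfolding conn_def by blast
  then obtain xs0 where "is_walk E xs0" "hd xs0 = ?a" "last xs0 = z" "set xs0 \<subseteq> ?S"
    using rel_walk[of E ?S ?a z] by blast
  then have ex: "is_walk E xs0 \<and> hd xs0 = ?a \<and> last xs0 = z \<and> set xs0 \<subseteq> ?S" by blast
  obtain xs where xs: "is_walk E xs \<and> hd xs = ?a \<and> last xs = z \<and> set xs \<subseteq> ?S"
    and mn: "\<forall>ys. is_walk E ys \<and> hd ys = ?a \<and> last ys = z \<and> set ys \<subseteq> ?S \<longrightarrow> length xs \<le> length ys"
    using ex_has_least_nat[of "\<lambda>ys. is_walk E ys \<and> hd ys = ?a \<and> last ys = z \<and> set ys \<subseteq> ?S" xs0 length, OF ex]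
    by blast
  have ip: "induced_path E xs"
    using min_walk_induced[where E=E, OF symE irrE, of xs ?a z ?S] xs mn by blast
  have xne: "xs \<noteq> []" using ip unfolding induced_path_def by blast
  have xs_eq: "xs = ?a # tl xs" using xs xne by (metis list.collapse)
  let ?ts = "tl xs"
  have dist: "distinct (?a # ?ts)" using ip xs_eq unfolding induced_path_def by metis
  have tsne: "?ts \<noteq> []"
  proof
    assume "?ts = []"
    then have "xs = [?a]" using xs_eq by simp
    then have "z = ?a" using xs by simp
    then show False using z aZ by simp
  qed
  have tsZ: "set ?ts \<subseteq> Z"
  proof
    fix t assume t: "t \<in> set ?ts"
    then have "t \<in> set xs" using xs_eq by (metis list.set_intros(2))
    then have "t \<in> ?S" using xs by blast
    moreover have "t \<noteq> ?a" using dist t by auto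
    ultimately show "t \<in> Z" by blast
  qed
  have lt: "last ?ts = z" using xs xs_eq tsne by (metis last_ConsR)
  have "induced_path E (qs @ ?ts)"
  proof (rule induced_append[where E=E, OF symE Q(1)])
    show "induced_path E (last qs # tl xs)" using ip xs_eq by metis
    show "\<forall>i. Suc i < length qs \<longrightarrow> (\<forall>t\<in>set (tl xs). \<not> E (qs ! i) t)"
      using na tsZ unfolding attached_def by blast
    show "set qs \<inter> set (tl xs) = {}" using tsZ Z(3) by blast
  qed
  then show ?thesis using tsne tsZ lt by blast
qed


lemma earlier: assumes "p \<in> C" "x \<in> C" "gr p < gr x" shows "grading_earlier Ws p x"
  unfolding grading_earlier_def using assms gr by blast

lemma build:
  assumes cfg: "config \<theta>" and th: "2 * l * kap \<le> \<theta>" and l2: "l \<ge> 2"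
  shows "\<exists>ps. induced_path E ps \<and> set ps \<subseteq> C \<and> length ps \<ge> l
     \<and> square_edge E bs (ps ! 0) (ps ! 1)
     \<and> (\<forall>j. 2 \<le> j \<and> j < length ps \<longrightarrow>
           grading_earlier Ws (ps ! 0) (ps ! j) \<and> grading_earlier Ws (ps ! 1) (ps ! j))
     \<and> (\<forall>v \<in> {earliest_parent E bs (ps ! 0), earliest_parent E bs (ps ! 1)} \<union> set (take l ps).
           last ps \<notin> ball E \<rho> v)"
proof -
  obtain p1 p2 j Z where P: "p1 \<in> C" "p2 \<in> C" "square_edge E bs p1 p2" "gr p1 \<le> j" "gr p2 \<le> j"
     "Z \<subseteq> later j" "conn E Z" "attached E p2 Z" "\<not> attached E p1 Z" "\<theta> < chromatic_number E Z"
    using cfg unfolding config_def by blast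
  let ?q0 = "[p1, p2]"
  have e12: "E p1 p2" using P(3) unfolding square_edge_def by blast
  have ip0: "induced_path E ?q0" using e12 symE irrE by (intro induced_two) auto
  have s0: "set ?q0 \<subseteq> C" using P(1,2) by simp
  have ZC: "Z \<subseteq> C" using P(6) later_sub by blast
  have d0: "set ?q0 \<inter> Z = {}" using P(4,5,6) unfolding later_def by auto
  have a0: "attached E (last ?q0) Z" using P(8) by simp
  have n0: "\<forall>i. Suc i < length ?q0 \<longrightarrow> \<not> attached E (?q0 ! i) Z" using P(9) by simp
  have "(l - 2) + (l + 2) = 2 * l" using l2 by simp
  then have "(l - 2) * kap + (l + 2) * kap = 2 * l * kap" by (metis add_mult_distrib)
  then have "(l - 2) * kap + (l + 2) * kap < chromatic_number E Z" using th P(10) by simp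
  then obtain rest Zf where R: "length rest = l - 2" "set rest \<subseteq> Z" "Zf \<subseteq> Z"
     "induced_path E (?q0 @ rest)" "conn E Zf" "set (?q0 @ rest) \<inter> Zf = {}"
     "attached E (last (?q0 @ rest)) Zf"
     "\<forall>i. Suc i < length (?q0 @ rest) \<longrightarrow> \<not> attached E ((?q0 @ rest) ! i) Zf"
     "(l + 2) * kap < chromatic_number E Zf"
    using iter[OF ip0 s0 ZC P(7) d0 a0 n0, of "l - 2" "(l + 2) * kap"] by blast
  let ?qs = "?q0 @ rest"
  have lq: "length ?qs = l" using R(1) l2 by simp
  have sq: "set ?qs \<subseteq> C" using s0 R(2) ZC by auto
  have ZfC: "Zf \<subseteq> C" using R(3) ZC by blast
  have ZfV: "Zf \<subseteq> V" using ZfC CV by blast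
  let ?F = "{earliest_parent E bs p1, earliest_parent E bs p2} \<union> set ?qs"
  have FV: "?F \<subseteq> V" using par_V P(1,2) sq CV by auto
  have cF: "card ?F \<le> l + 2"
  proof -
    have "card ?F \<le> card {earliest_parent E bs p1, earliest_parent E bs p2} + card (set ?qs)"
      by (rule card_Un_le)
    also have "\<dots> \<le> 2 + length ?qs"
    proof (rule add_mono)
      show "card {earliest_parent E bs p1, earliest_parent E bs p2} \<le> 2"
        by (cases "earliest_parent E bs p1 = earliest_parent E bs p2") auto
      show "card (set ?qs) \<le> length ?qs" by (rule card_length)
    qed
    finally show ?thesis using lq by simp
  qed
  let ?A = "\<lambda>f. Zf \<inter> ball E \<rho> f"
  have cU: "chromatic_number E (\<Union>f\<in>?F. ?A f) \<le> card ?F * kap"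
  proof (rule chi_UN[where E=E])
    show "finite ?F" by simp
    show "\<forall>i\<in>?F. finite (?A i)" using finsub[OF ZfV] by blast
    show "\<forall>i\<in>?F. chromatic_number E (?A i) \<le> kap"
    proof
      fix f assume "f \<in> ?F"
      then have "f \<in> V" using FV by blast
      then show "chromatic_number E (?A f) \<le> kap" by (rule chi_sub_ball) blast
    qed
    show "\<forall>x. \<not> E x x" by (rule irrE)
  qed
  let ?U = "\<Union>f\<in>?F. ball E \<rho> f"
  have eqU: "(\<Union>f\<in>?F. ?A f) = Zf \<inter> ?U" by blast
  have "chromatic_number E Zf \<le> chromatic_number E (Zf - ?U) + chromatic_number E (Zf \<inter> ?U)"
    by (rule chi_diff[where E=E, OF finsub[OF ZfV] irrE])
  moreover have "chromatic_number E (Zf \<inter> ?U) \<le> (l + 2) * kap"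
  proof -
    have "card ?F * kap \<le> (l + 2) * kap" using cF by (rule mult_le_mono1)
    then show ?thesis using cU eqU by simp
  qed
  ultimately have "0 < chromatic_number E (Zf - ?U)" using R(9) by linarith
  then have "Zf - ?U \<noteq> {}" using chi_empty[of E] by (metis less_irrefl)
  then obtain z where z: "z \<in> Zf" "z \<notin> ?U" by blast
  obtain ts where T: "ts \<noteq> []" "set ts \<subseteq> Zf" "last ts = z" "induced_path E (?qs @ ts)"
    using tail[OF R(4) sq ZfC R(5,6,7,8) z(1)] by blast
  let ?ps = "?qs @ ts"
  have ps0: "?ps ! 0 = p1" "?ps ! 1 = p2" by simp_all
  have lastps: "last ?ps = z" using T(1,3) by simp
  have takeps: "take l ?ps = ?qs" using lq by (metis append_eq_conv_conj)
  have inZ: "?ps ! k \<in> Z" if k: "2 \<le> k" "k < length ?ps" for k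
  proof -
    define k' where "k' = k - 2"
    have kk: "k = Suc (Suc k')" using k(1) unfolding k'_def by simp
    have "?ps = p1 # p2 # (rest @ ts)" by simp
    then have "?ps ! k = (rest @ ts) ! (k - 2)" unfolding kk by simp
    moreover have "k - 2 < length (rest @ ts)" using k by simp
    moreover have "(rest @ ts) ! (k - 2) \<in> set (rest @ ts)" using \<open>k - 2 < length (rest @ ts)\<close> by (rule nth_mem)
    ultimately have "?ps ! k \<in> set (rest @ ts)" by simp
    then show ?thesis using R(2,3) T(2) by auto
  qed
  show ?thesis
  proof (intro exI[of _ ?ps] conjI allI impI ballI)
    show "induced_path E ?ps" by (rule T(4))
    show "set ?ps \<subseteq> C" using sq T(2) ZfC by auto
    show "l \<le> length ?ps" using lq by simp
    show "square_edge E bs (?ps ! 0) (?ps ! 1)" using P(3) ps0 by simp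
  next
    fix k assume k: "2 \<le> k \<and> k < length ?ps"
    then have x: "?ps ! k \<in> later j" using inZ P(6) by blast
    then have xC: "?ps ! k \<in> C" "j < gr (?ps ! k)" unfolding later_def by auto
    show "grading_earlier Ws (?ps ! 0) (?ps ! k)"
      using earlier[OF P(1) xC(1)] xC(2) P(4) ps0 by simp
    show "grading_earlier Ws (?ps ! 1) (?ps ! k)"
      using earlier[OF P(2) xC(1)] xC(2) P(5) ps0 by simp
  next
    fix v assume v: "v \<in> {earliest_parent E bs (?ps ! 0), earliest_parent E bs (?ps ! 1)} \<union> set (take l ?ps)"
    then have "v \<in> ?F" using ps0 takeps by simp blast
    then show "last ?ps \<notin> ball E \<rho> v" using z(2) lastps by blast
  qed
qed

end
lemma arith_main:
  fixes w t l k :: nat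
  assumes "1 \<le> w" "1 \<le> t"
  shows "2*l*k + k + w + k*t \<le> w*t*(4*(l+2)*k + w)"
proof -
  have P1: "t \<le> w*t" using assms(1) by simp
  have P2: "w \<le> w*t" using assms(2) by simp
  have "k \<le> k*t" using assms(2) by simp
  then have "(2*l+1)*k \<le> (2*l+1)*(k*t)" by (rule mult_le_mono2)
  moreover have "2*l*k + k = (2*l+1)*k" by (simp add: algebra_simps)
  ultimately have "2*l*k + k + k*t \<le> (2*l+1)*(k*t) + k*t" by linarith
  also have "\<dots> \<le> (4*(l+2)*k)*t" by (simp add: algebra_simps)
  also have "\<dots> \<le> (4*(l+2)*k)*(w*t)" using P1 by (rule mult_le_mono2)
  finally have A: "2*l*k + k + k*t \<le> (4*(l+2)*k)*(w*t)" .
  have B: "w \<le> w*(w*t)" using assms by simp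
  have "2*l*k + k + w + k*t = (2*l*k + k + k*t) + w" by simp
  also have "\<dots> \<le> (4*(l+2)*k)*(w*t) + w*(w*t)" using A B by (rule add_mono)
  also have "\<dots> = w*t*(4*(l+2)*k + w)" by (simp add: algebra_simps)
  finally show ?thesis .
qed

theorem mainTheorem6:
  fixes V :: "'a set" and E :: "'a \<Rightarrow> 'a \<Rightarrow> bool"
    and B C :: "'a set" and bs :: "'a list" and Ws :: "'a set list"
    and \<tau> w l \<rho> :: nat
  assumes G: "simple_graph V E"
    and BV: "B \<subseteq> V" and CV: "C \<subseteq> V"
    and cov: "covers E B C"
    and tau: "\<forall>X\<subseteq>V. clique_number E X < clique_number E V \<longrightarrow> chromatic_number E X \<le> \<tau>"
    and enum: "distinct bs" "set bs = B"
    and grading: "is_grading Ws C"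
    and compat: "compatible E bs Ws C"
    and wcol: "grading_colourable E Ws w"
    and l3: "l \<ge> 3" and r3: "\<rho> \<ge> 3"
    and big: "chromatic_number E C > w * \<tau> * (4 * (l + 2) * local_chi V E \<rho> + w)"
  shows "\<exists>ps. induced_path E ps \<and> set ps \<subseteq> C \<and> length ps \<ge> l
     \<and> square_edge E bs (ps ! 0) (ps ! 1)
     \<and> (\<forall>j. 2 \<le> j \<and> j < length ps \<longrightarrow>
           grading_earlier Ws (ps ! 0) (ps ! j) \<and> grading_earlier Ws (ps ! 1) (ps ! j))
     \<and> (\<forall>v \<in> {earliest_parent E bs (ps ! 0), earliest_parent E bs (ps ! 1)} \<union> set (take l ps).
           last ps \<notin> ball E \<rho> v)"
proof -
  have S: "setting V E B C bs Ws \<tau> w \<rho>"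
    unfolding setting_def using G BV CV cov tau enum(2) grading wcol r3 by auto
  interpret setting V E B C bs Ws \<tau> w \<rho> by (rule S)
  have kk: "local_chi V E \<rho> = kap" unfolding kap_def ..
  define \<theta> where "\<theta> = 2 * l * kap"
  have Cne: "C \<noteq> {}"
  proof
    assume "C = {}"
    then have "chromatic_number E C = 0" using chi_empty[of E] by simp
    then show False using big by simp
  qed
  then obtain v where v: "v \<in> C" by blast
  have vV: "v \<in> V" using v CV by blast
  have w1: "1 \<le> w"
  proof -
    have WV: "Ws ! gr v \<subseteq> V" using Ws_sub[OF gr(1)[OF v]] CV by blast
    have "Ws ! gr v \<noteq> {}" using gr(2)[OF v] by blast
    then have "0 < chromatic_number E (Ws ! gr v)" using pos'[OF WV] by blast
    then show ?thesis using chi_W[OF gr(1)[OF v]] by simp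
  qed
  have t1: "1 \<le> \<tau>"
  proof -
    have "\<forall>u\<in>{v}. \<forall>u'\<in>{v}. \<not> square_edge E bs u u'" using irrE unfolding square_edge_def by blast
    then have "chromatic_number E {v} \<le> \<tau>" using v by (intro sqfree) auto
    moreover have "0 < chromatic_number E {v}" using pos'[of "{v}"] vV by blast
    ultimately show ?thesis by simp
  qed
  have cfg: "config \<theta>"
  proof (rule ccontr)
    assume nc: "\<not> config \<theta>"
    have "chromatic_number E C \<le> \<theta> + kap + w + kap * \<tau>" by (rule count[OF nc])
    also have "\<dots> \<le> w * \<tau> * (4 * (l + 2) * kap + w)"
      unfolding \<theta>_def by (rule arith_main[OF w1 t1])
    finally show False using big kk by simp
  qed
  have l2: "l \<ge> 2" using l3 by simp
  show ?thesis using build[OF cfg _ l2] unfolding \<theta>_def by simp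
qed

end
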